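(* Let $h:[0,\infty)\to[0,\infty)$ satisfy $h(0)=0$ and be concave, and suppose that either $h(t)/t\not\to\infty$ as $t\to0^+$, or $h(t)/t\not\to0$ as $t\to\infty$. Then there exists an infinite metric space $(X,d)$ such that $(X,h\circ d)$ admits an isometric embedding into the $2$-dimensional Euclidean space $\mathbb R^2$. *)

theory Defs
  imports "HOL-Analysis.Analysis"
begin

end

theory Submission
  imports Defs
begin


definition emb :: "complex \<Rightarrow> real^2" where "emb z = vector [Re z, Im z]"
lemma dist_emb: "dist (emb z) (emb w) = cmod (z - w)"
  unfolding dist_norm norm_vec_def L2_set_def emb_def
  by (simp add: sum_2 cmod_def power2_eq_square vector_2 real_norm_def)

lemma main_abs:
  fixes h g :: "real \<Rightarrow> real" and p :: "nat \<Rightarrow> complex"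
  assumes h0: "h 0 = 0"
  and gpos: "\<And>m n. m \<noteq> n \<Longrightarrow> g (cmod (p m - p n)) > 0"
  and hg: "\<And>m n. m \<noteq> n \<Longrightarrow> h (g (cmod (p m - p n))) = cmod (p m - p n)"
  and tri: "\<And>i j k. i<j \<Longrightarrow> j<k \<Longrightarrow>
      g (cmod (p i - p k)) \<le> g (cmod (p i - p j)) + g (cmod (p j - p k)) \<and>
      g (cmod (p i - p j)) \<le> g (cmod (p i - p k)) + g (cmod (p j - p k)) \<and>
      g (cmod (p j - p k)) \<le> g (cmod (p i - p j)) + g (cmod (p i - p k))"
  shows "\<exists>(X :: nat set) (d :: nat \<Rightarrow> nat \<Rightarrow> real).
           infinite X \<and> Metric_space X d \<and>
           (\<exists>f :: nat \<Rightarrow> real^2. \<forall>x\<in>X. \<forall>y\<in>X. dist (f x) (f y) = h (d x y))"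
proof -
  define G where "G m n = g (cmod (p m - p n))" for m n
  have Gsym: "G m n = G n m" for m n unfolding G_def by (simp add: norm_minus_commute)
  define d where "d m n = (if m = n then 0 else G m n)" for m n
  have tri': "G i k \<le> G i j + G j k \<and> G i j \<le> G i k + G j k \<and> G j k \<le> G i j + G i k"
    if "i<j" "j<k" for i j k using tri[OF that] unfolding G_def by simp
  have Gpos: "m \<noteq> n \<Longrightarrow> G m n > 0" for m n using gpos unfolding G_def by simp
  have "Metric_space UNIV d"
  proof
    fix x y show "0 \<le> d x y" unfolding d_def using Gpos by (simp add: less_imp_le)
    show "d x y = d y x" unfolding d_def using Gsym by simp
    show "d x y = 0 \<longleftrightarrow> x = y" unfolding d_def using Gpos by force
  next
    fix x y z
    show "d x z \<le> d x y + d y z"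
    proof (cases "x = y \<or> y = z \<or> x = z")
      case True then show ?thesis unfolding d_def using Gpos Gsym
        by (auto simp: less_imp_le add_nonneg_nonneg)
    next
      case False
      then have ne: "x \<noteq> y" "y \<noteq> z" "x \<noteq> z" by auto
      then have "G x z \<le> G x y + G y z"
      proof -
        have s: "G y x = G x y" "G z y = G y z" "G z x = G x z" using Gsym by auto
        have "x<y\<and>y<z \<or> x<z\<and>z<y \<or> y<x\<and>x<z \<or> y<z\<and>z<x \<or> z<x\<and>x<y \<or> z<y\<and>y<x"
          using ne by arith
        then show ?thesis
        proof (elim disjE conjE)
          assume "x<y" "y<z" then show ?thesis using tri'[of x y z] s by linarith
        next
          assume "x<z" "z<y" then show ?thesis using tri'[of x z y] s by linarith
        next
          assume "y<x" "x<z" then show ?thesis using tri'[of y x z] s by linarith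
        next
          assume "y<z" "z<x" then show ?thesis using tri'[of y z x] s by linarith
        next
          assume "z<x" "x<y" then show ?thesis using tri'[of z x y] s by linarith
        next
          assume "z<y" "y<x" then show ?thesis using tri'[of z y x] s by linarith
        qed
      qed
      then show ?thesis unfolding d_def using ne by simp
    qed
  qed
  moreover have "\<forall>x\<in>UNIV. \<forall>y\<in>UNIV. dist ((emb \<circ> p) x) ((emb \<circ> p) y) = h (d x y)"
    unfolding d_def G_def using hg h0 by (simp add: dist_emb)
  ultimately show ?thesis by blast
qed


lemma cmod_diff_sq: "(cmod (P - A))^2 = (cmod P)^2 + (cmod A)^2 - 2 * Re (A * cnj P)"
  by (simp only: cmod_power2) (simp add: power2_eq_square algebra_simps)

lemma GL:
  fixes P A B :: complex and R \<rho> \<epsilon> c :: real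
  assumes P: "cmod P = R" and A: "cmod A = \<rho>" and B: "cmod B \<le> \<epsilon>*\<rho>" and rR: "\<rho> \<le> \<epsilon>*R"
    and e0: "0<\<epsilon>" and e1: "\<epsilon> \<le> 1/8" and c0: "0 \<le> c"
    and ang: "\<bar>Re (A * cnj P)\<bar> \<le> c*\<rho>*R" and r0: "0 < \<rho>"
  shows "\<bar>cmod(P-A) - cmod(P-B)\<bar> \<le> (c+2*\<epsilon>)/(1-\<epsilon>)^2 * cmod(A-B)"
    and "(1-\<epsilon>)*\<rho> \<le> cmod(A-B)" and "cmod(A-B) \<le> 2*\<rho>"
    and "cmod (A-B) \<le> cmod(P-A)" and "cmod(A-B) \<le> cmod(P-B)"
    and "cmod(P-A) \<le> 2*R" and "cmod(P-B) \<le> 2*R"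
proof -
  have Rnn: "R \<ge> 0" using P by auto
  have R0: "\<rho> \<le> R/8" using rR mult_right_mono[OF e1 Rnn] by linarith
  have Rpos: "R > 0" using R0 r0 by linarith
  have eB: "\<epsilon>*\<rho> \<le> \<rho>" using e1 r0 by (simp add: mult_le_cancel_right1)
  have lowAB: "(1-\<epsilon>)*\<rho> \<le> cmod(A-B)"
    using norm_triangle_ineq2[of A B] A B by (simp add: algebra_simps)
  show "(1-\<epsilon>)*\<rho> \<le> cmod(A-B)" by (fact lowAB)
  have upAB: "cmod(A-B) \<le> 2*\<rho>" using norm_triangle_ineq4[of A B] A B eB by linarith
  show "cmod(A-B) \<le> 2*\<rho>" by (fact upAB)
  have xl: "cmod(P-A) \<ge> R - \<rho>" using norm_triangle_ineq2[of P A] P A by linarith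
  have yl: "cmod(P-B) \<ge> R - \<rho>" using norm_triangle_ineq2[of P B] P B eB by linarith
  show "cmod (A-B) \<le> cmod(P-A)" "cmod(A-B) \<le> cmod(P-B)" using xl yl upAB R0 r0 by linarith+
  show "cmod(P-A) \<le> 2*R" using norm_triangle_ineq4[of P A] P A R0 r0 by linarith
  show "cmod(P-B) \<le> 2*R" using norm_triangle_ineq4[of P B] P B R0 r0 eB by linarith
  define x where "x = cmod (P-A)"
  define y where "y = cmod (P-B)"
  have reB: "\<bar>Re (B * cnj P)\<bar> \<le> \<epsilon>*\<rho>*R"
  proof -
    have "\<bar>Re (B * cnj P)\<bar> \<le> cmod (B * cnj P)" by (rule abs_Re_le_cmod)
    also have "\<dots> = cmod B * R" using P by (simp add: norm_mult)
    also have "\<dots> \<le> \<epsilon>*\<rho>*R" using B Rpos by (simp add: mult_right_mono)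
    finally show ?thesis .
  qed
  have Bsq: "(cmod B)^2 \<le> \<rho>^2" using B eB by (simp add: power_mono)
  have diff: "x^2 - y^2 = \<rho>^2 - (cmod B)^2 - 2*Re (A * cnj P) + 2 * Re (B * cnj P)"
    unfolding x_def y_def cmod_diff_sq using A by simp
  define N where "N = \<rho>^2 + 2*c*\<rho>*R + 2*\<epsilon>*\<rho>*R"
  have absN: "\<bar>x^2 - y^2\<bar> \<le> N" unfolding diff N_def using ang reB Bsq
    using zero_le_power2[of "cmod B"] by (simp only: abs_le_iff) linarith
  have fac: "\<bar>x^2 - y^2\<bar> = (x+y) * \<bar>x - y\<bar>"
  proof -
    have "x^2 - y^2 = (x+y)*(x-y)" by (simp add: power2_eq_square algebra_simps)
    moreover have "x + y \<ge> 0" unfolding x_def y_def by simp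
    ultimately show ?thesis by (simp add: abs_mult)
  qed
  define K where "K = (c+2*\<epsilon>)/(1-\<epsilon>) * \<rho>"
  have key: "(\<rho> + 2*(c+\<epsilon>)*R)*(1-\<epsilon>) \<le> 2*(R-\<rho>)*(c+2*\<epsilon>)"
  proof -
    have q1: "\<rho>*(2*c+3*\<epsilon>+1) \<le> \<epsilon>*R*(2*c+3*\<epsilon>+1)"
      using rR c0 e0 by (intro mult_right_mono) auto
    have q2: "0 \<le> \<epsilon>*R*(1-\<epsilon>)" using e0 e1 Rpos by simp
    have q3: "2*(R-\<rho>)*(c+2*\<epsilon>) - (\<rho> + 2*(c+\<epsilon>)*R)*(1-\<epsilon>) = 2*R*\<epsilon>*(1+c+\<epsilon>) - \<rho>*(2*c+3*\<epsilon>+1)"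
      by algebra
    have q4: "2*R*\<epsilon>*(1+c+\<epsilon>) - \<epsilon>*R*(2*c+3*\<epsilon>+1) = \<epsilon>*R*(1-\<epsilon>)" by algebra
    show ?thesis using q1 q2 q3 q4 by linarith
  qed
  have NK: "N \<le> 2*(R-\<rho>)*K"
  proof -
    have "N = \<rho> * (\<rho> + 2*(c+\<epsilon>)*R)" unfolding N_def by algebra
    also have "\<dots> \<le> \<rho> * (2*(R-\<rho>)*(c+2*\<epsilon>) / (1-\<epsilon>))"
      using key e1 r0 by (intro mult_left_mono) (simp_all add: pos_le_divide_eq)
    also have "\<dots> = 2*(R-\<rho>)*K" unfolding K_def by simp
    finally show ?thesis .
  qed
  have xy: "x + y \<ge> 2*(R-\<rho>)" using xl yl x_def y_def by (simp add: algebra_simps)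
  have Rr: "R - \<rho> > 0" using R0 r0 by linarith
  have K0: "K \<ge> 0" unfolding K_def using c0 e0 e1 r0 by simp
  have dK: "\<bar>x - y\<bar> \<le> K"
  proof (rule ccontr)
    assume "\<not> ?thesis"
    then have "\<bar>x-y\<bar> > K" by simp
    then have "2*(R-\<rho>)*\<bar>x-y\<bar> > 2*(R-\<rho>)*K" using Rr by simp
    moreover have "(x+y)*\<bar>x-y\<bar> \<ge> 2*(R-\<rho>)*\<bar>x-y\<bar>" using xy by (simp add: mult_right_mono)
    ultimately show False using absN fac NK by linarith
  qed
  have "K \<le> (c+2*\<epsilon>)/(1-\<epsilon>)^2 * cmod(A-B)"
  proof -
    have "K = (c+2*\<epsilon>)/(1-\<epsilon>)^2 * ((1-\<epsilon>)*\<rho>)" unfolding K_def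
    proof -
      have ne: "1 - \<epsilon> \<noteq> 0" using e1 by simp
      show "(c + 2 * \<epsilon>) / (1 - \<epsilon>) * \<rho> = (c + 2 * \<epsilon>) / (1 - \<epsilon>)\<^sup>2 * ((1 - \<epsilon>) * \<rho>)"
        using ne by (simp add: power2_eq_square)
    qed
    also have "\<dots> \<le> (c+2*\<epsilon>)/(1-\<epsilon>)^2 * cmod(A-B)"
      using lowAB c0 e0 by (intro mult_left_mono) auto
    finally show ?thesis .
  qed
  then show "\<bar>cmod(P-A) - cmod(P-B)\<bar> \<le> (c+2*\<epsilon>)/(1-\<epsilon>)^2 * cmod(A-B)"
    using dK unfolding x_def y_def by linarith
qed


definition phi :: "nat \<Rightarrow> real" where "phi n = 1 - (1/2)^n"
definition cc :: "nat \<Rightarrow> real" where "cc n = cos ((1/2)^(Suc n))"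
definition ee :: "nat \<Rightarrow> real" where "ee n = (1 - cc n)/8"
definition tt :: "nat \<Rightarrow> real" where "tt n = (cc n + 2*ee n)/(1 - ee n)^2"

lemma half_pow_le: "(1/2::real)^(Suc n) \<le> 1/2"
  by (simp add: power_le_one)

lemma cc_pos: "0 < cc n"
  unfolding cc_def using half_pow_le[of n] pi_gt3 by (intro cos_gt_zero) auto

lemma cc_lt1: "cc n < 1"
proof -
  have "cos ((1/2::real)^(Suc n)) < cos 0"
    using half_pow_le[of n] pi_gt3 by (intro cos_monotone_0_pi) auto
  then show ?thesis unfolding cc_def by simp
qed

lemma ee_pos: "0 < ee n" unfolding ee_def using cc_lt1[of n] by simp
lemma ee_le: "ee n \<le> 1/8" unfolding ee_def using cc_pos[of n] by simp

lemma ee_anti: "ee (Suc n) \<le> ee n"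
proof -
  have "cos ((1/2::real)^(Suc n)) \<le> cos ((1/2)^(Suc (Suc n)))"
    using half_pow_le[of n] pi_gt3 by (intro cos_monotone_0_pi_le) auto
  then show ?thesis unfolding ee_def cc_def by simp
qed

lemma tt_pos: "0 < tt n" unfolding tt_def using cc_pos[of n] ee_pos[of n] ee_le[of n] by simp

lemma tt_lt1: "tt n < 1"
proof -
  define e where "e = 1 - cc n"
  have e0: "0 < e" "e \<le> 1" unfolding e_def using cc_lt1[of n] cc_pos[of n] by auto
  have ee: "ee n = e/8" unfolding ee_def e_def by simp
  have "cc n + 2*ee n = 1 - 3*e/4" unfolding ee e_def by (simp add: field_simps)
  also have "\<dots> < (1 - e/8)^2"
  proof -
    have "0 < e/2 + e*e/64" using e0 by (simp add: add_pos_nonneg)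
    then show ?thesis by (simp add: power2_eq_square algebra_simps)
  qed
  finally have "cc n + 2*ee n < (1 - ee n)^2" unfolding ee .
  moreover have "(1 - ee n)^2 > 0" using ee_le[of n] by simp
  ultimately show ?thesis unfolding tt_def by simp
qed

lemma ang: assumes "a < b" shows "\<bar>cos (phi a - phi b)\<bar> \<le> cc a"
proof -
  define x where "x = (1/2::real)^a - (1/2)^b"
  have "phi a - phi b = - x" unfolding x_def phi_def by simp
  then have "cos (phi a - phi b) = cos x" by simp
  have b1: "(1/2::real)^b \<le> (1/2)^(Suc a)" using assms by (intro power_decreasing) auto
  have x1: "(1/2::real)^(Suc a) \<le> x" unfolding x_def using b1 by simp
  have x2: "x \<le> 1" unfolding x_def using power_le_one[of "1/2::real" a] zero_le_power[of "1/2::real" b] by linarith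
  have p: "(0::real) < (1/2)^(Suc a)" by simp
  have "0 < cos x" using x1 x2 p pi_gt3 by (intro cos_gt_zero) linarith+
  moreover have "cos x \<le> cc a" unfolding cc_def using x1 x2 p pi_gt3
    by (intro cos_monotone_0_pi_le) auto
  ultimately show ?thesis using \<open>cos (phi a - phi b) = cos x\<close> by simp
qed

lemma Re_rcis: "Re (complex_of_real ra * cis a * cnj (complex_of_real rp * cis b)) = ra*rp*cos(a - b)"
  by (simp add: cos_diff algebra_simps)



definition pt :: "(nat \<Rightarrow> real) \<Rightarrow> nat \<Rightarrow> complex" where
  "pt r n = complex_of_real (r n) * cis (phi n)"

lemma cmod_pt: "0 \<le> r n \<Longrightarrow> cmod (pt r n) = r n"
  unfolding pt_def by (simp add: norm_mult)

lemma Re_pt: "\<bar>Re (pt r a * cnj (pt r b))\<bar> = \<bar>r a * r b * cos (phi a - phi b)\<bar>"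
  unfolding pt_def using Re_rcis by simp

lemma GeomB:
  assumes rpos: "\<And>n. 0 < r n" and rstep: "\<And>n. r n \<le> ee (Suc n) * r (Suc n)"
    and ij: "i < j" and jk: "j < k"
  shows "\<bar>cmod (pt r i - pt r k) - cmod (pt r j - pt r k)\<bar> \<le> tt j * cmod (pt r i - pt r j)"
    and "cmod (pt r i - pt r j) \<le> cmod (pt r i - pt r k)"
    and "cmod (pt r i - pt r j) \<le> cmod (pt r j - pt r k)"
proof -
  have rinc: "r n \<le> r (Suc n)" for n
    using rstep[of n] ee_le[of "Suc n"] rpos[of "Suc n"]
      mult_right_mono[of "ee (Suc n)" 1 "r (Suc n)"] by linarith
  have rmono: "m \<le> n \<Longrightarrow> r m \<le> r n" for m n by (rule lift_Suc_mono_le[of r, OF rinc])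
  have c1: "r i \<le> ee j * r j"
  proof -
    obtain j' where j': "j = Suc j'" using ij by (cases j) auto
    have "r i \<le> r j'" using ij j' by (intro rmono) auto
    then show ?thesis using rstep[of j'] j' by simp
  qed
  have c2: "r j \<le> ee j * r k"
  proof -
    have "r j \<le> ee (Suc j) * r (Suc j)" by (rule rstep)
    also have "\<dots> \<le> ee j * r k"
      using ee_anti[of j] rmono[of "Suc j" k] jk rpos ee_pos[of "Suc j"]
      by (intro mult_mono) (auto intro: less_imp_le)
    finally show ?thesis .
  qed
  have angle: "\<bar>Re (pt r j * cnj (pt r k))\<bar> \<le> cc j * r j * r k"
    unfolding Re_pt using ang[OF jk] rpos[of j] rpos[of k]
    by (simp add: abs_mult mult_left_mono mult.commute mult.left_commute)
  have c1': "cmod (pt r i) \<le> ee j * r j" using c1 cmod_pt[of r i] rpos[of i] by simp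
  note cp = cmod_pt[OF less_imp_le[OF rpos]]
  note G = GL[OF cp cp c1' c2 ee_pos ee_le less_imp_le[OF cc_pos] angle rpos]
  show "\<bar>cmod (pt r i - pt r k) - cmod (pt r j - pt r k)\<bar> \<le> tt j * cmod (pt r i - pt r j)"
    using G(1) unfolding tt_def by (simp add: norm_minus_commute abs_minus_commute)
  show "cmod (pt r i - pt r j) \<le> cmod (pt r i - pt r k)"
    using G(5) by (simp add: norm_minus_commute)
  show "cmod (pt r i - pt r j) \<le> cmod (pt r j - pt r k)"
    using G(4) by (simp add: norm_minus_commute)
qed


lemma GeomB_pair:
  assumes rpos: "\<And>n. 0 < r n" and rstep: "\<And>n. r n \<le> ee (Suc n) * r (Suc n)"
    and mn: "m < n"
  shows "r n / 2 \<le> cmod (pt r m - pt r n)"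
proof -
  have rinc: "r n \<le> r (Suc n)" for n
    using rstep[of n] ee_le[of "Suc n"] rpos[of "Suc n"]
      mult_right_mono[of "ee (Suc n)" 1 "r (Suc n)"] by linarith
  have rmono: "m \<le> n \<Longrightarrow> r m \<le> r n" for m n by (rule lift_Suc_mono_le[of r, OF rinc])
  obtain n' where n': "n = Suc n'" using mn by (cases n) auto
  have "r m \<le> r n'" using mn n' by (intro rmono) auto
  also have "\<dots> \<le> ee n * r n" using rstep[of n'] n' by simp
  also have "\<dots> \<le> r n / 2" using ee_le[of n] rpos[of n] mult_right_mono[of "ee n" "1/8" "r n"] by simp
  finally have "r m \<le> r n / 2" .
  moreover have "r n - r m \<le> cmod (pt r n - pt r m)"
    using norm_triangle_ineq2[of "pt r n" "pt r m"] cmod_pt[of r n] cmod_pt[of r m] rpos[of n] rpos[of m]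
    by simp
  ultimately show ?thesis by (simp add: norm_minus_commute)
qed

lemma GeomA:
  assumes rpos: "\<And>n. 0 < r n" and rstep: "\<And>n. r (Suc n) \<le> ee n * r n"
    and ij: "i < j" and jk: "j < k"
  shows "\<bar>cmod (pt r i - pt r j) - cmod (pt r i - pt r k)\<bar> \<le> tt i * cmod (pt r j - pt r k)"
    and "cmod (pt r j - pt r k) \<le> cmod (pt r i - pt r j)"
    and "cmod (pt r j - pt r k) \<le> cmod (pt r i - pt r k)"
    and "cmod (pt r i - pt r j) \<le> 2 * r i"
    and "cmod (pt r i - pt r k) \<le> 2 * r i"
    and "cmod (pt r j - pt r k) \<le> 2 * r i"
proof -
  have rdec: "r (Suc n) \<le> r n" for n
    using rstep[of n] ee_le[of n] rpos[of n]
      mult_right_mono[of "ee n" 1 "r n"] by linarith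
  have rmono: "m \<le> n \<Longrightarrow> r n \<le> r m" for m n by (rule lift_Suc_antimono_le[of r, OF rdec])
  have emono: "m \<le> n \<Longrightarrow> ee n \<le> ee m" for m n by (rule lift_Suc_antimono_le[of ee, OF ee_anti])
  have c1: "r k \<le> ee i * r j"
  proof -
    have "r k \<le> r (Suc j)" using jk by (intro rmono) auto
    also have "\<dots> \<le> ee j * r j" by (rule rstep)
    also have "\<dots> \<le> ee i * r j" using emono[of i j] ij rpos[of j] by (intro mult_right_mono) auto
    finally show ?thesis .
  qed
  have c2: "r j \<le> ee i * r i"
  proof -
    have "r j \<le> r (Suc i)" using ij by (intro rmono) auto
    also have "\<dots> \<le> ee i * r i" by (rule rstep)
    finally show ?thesis .
  qed
  have cs: "cos (phi j - phi i) = cos (phi i - phi j)"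
    by (metis cos_minus minus_diff_eq)
  have angle: "\<bar>Re (pt r j * cnj (pt r i))\<bar> \<le> cc i * r j * r i"
    unfolding Re_pt cs using ang[OF ij] rpos[of j] rpos[of i]
    by (simp add: abs_mult mult_left_mono mult.commute mult.left_commute)
  have c1': "cmod (pt r k) \<le> ee i * r j" using c1 cmod_pt[of r k] rpos[of k] by simp
  note cp = cmod_pt[OF less_imp_le[OF rpos]]
  note G = GL[OF cp cp c1' c2 ee_pos ee_le less_imp_le[OF cc_pos] angle rpos]
  show "\<bar>cmod (pt r i - pt r j) - cmod (pt r i - pt r k)\<bar> \<le> tt i * cmod (pt r j - pt r k)"
    using G(1) unfolding tt_def by simp
  show "cmod (pt r j - pt r k) \<le> cmod (pt r i - pt r j)" using G(4) by simp
  show "cmod (pt r j - pt r k) \<le> cmod (pt r i - pt r k)" using G(5) by simp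
  show "cmod (pt r i - pt r j) \<le> 2 * r i" using G(6) by simp
  show "cmod (pt r i - pt r k) \<le> 2 * r i" using G(7) by simp
  show "cmod (pt r j - pt r k) \<le> 2 * r i" using G(3) c2 ee_le[of i] rpos[of i]
      mult_right_mono[of "ee i" 1 "r i"] by linarith
qed

lemma GeomA_pair:
  assumes rpos: "\<And>n. 0 < r n" and rstep: "\<And>n. r (Suc n) \<le> ee n * r n"
    and mn: "m < n"
  shows "0 < cmod (pt r m - pt r n)" and "cmod (pt r m - pt r n) \<le> 2 * r 0"
proof -
  have rdec: "r (Suc n) \<le> r n" for n
    using rstep[of n] ee_le[of n] rpos[of n]
      mult_right_mono[of "ee n" 1 "r n"] by linarith
  have rmono: "m \<le> n \<Longrightarrow> r n \<le> r m" for m n by (rule lift_Suc_antimono_le[of r, OF rdec])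
  have "r n \<le> r (Suc m)" using mn by (intro rmono) auto
  also have "\<dots> \<le> ee m * r m" by (rule rstep)
  also have "\<dots> < r m" using ee_le[of m] rpos[of m] mult_strict_right_mono[of "ee m" 1 "r m"] by simp
  finally have lt: "r n < r m" .
  have "r m - r n \<le> cmod (pt r m - pt r n)"
    using norm_triangle_ineq2[of "pt r m" "pt r n"] cmod_pt[of r n] cmod_pt[of r m] rpos[of n] rpos[of m]
    by simp
  then show "0 < cmod (pt r m - pt r n)" using lt by linarith
  have "cmod (pt r m - pt r n) \<le> r m + r n"
    using norm_triangle_ineq4[of "pt r m" "pt r n"] cmod_pt[of r n] cmod_pt[of r m] rpos[of n] rpos[of m]
    by simp
  then show "cmod (pt r m - pt r n) \<le> 2 * r 0" using rmono[of 0 m] rmono[of 0 n] by linarith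
qed



context
  fixes h :: "real \<Rightarrow> real"
  assumes hnn: "\<And>t. t \<ge> 0 \<Longrightarrow> h t \<ge> 0" and h0: "h 0 = 0" and hc: "concave_on {0..} h"
begin

lemma chord:
  assumes "0 \<le> a" "a < b" "b < c"
  shows "h a + (b-a)/(c-a) * (h c - h a) \<le> h b"
proof -
  define t where "t = (b-a)/(c-a)"
  have t0: "0 \<le> t" "t \<le> 1" unfolding t_def using assms by (auto simp: divide_simps)
  have e: "t * (c - a) = b - a" unfolding t_def using assms by simp
  have "(1 - t) * a + t * c = a + t * (c - a)" by (simp add: algebra_simps)
  also have "\<dots> = b" using e by simp
  finally have "(1 - t) * a + t * c = b" .
  then have "(1 - t) * h a + t * h c \<le> h b"
    using concave_onD[OF hc t0, of a c] assms by simp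
  then have "h a + t * (h c - h a) \<le> h b" by (simp add: algebra_simps)
  then show ?thesis by (simp add: t_def)
qed

lemma lam_anti:
  assumes "0 < s" "s \<le> t"
  shows "h t / t \<le> h s / s"
proof -
  define u where "u = s/t"
  have u0: "0 \<le> u" "u \<le> 1" unfolding u_def using assms by auto
  have "(1 - u) * 0 + u * t = s" unfolding u_def using assms by simp
  then have "(1 - u) * h 0 + u * h t \<le> h s"
    using concave_onD[OF hc u0, of 0 t] assms by simp
  then have "s / t * h t \<le> h s" unfolding u_def h0 by simp
  then show ?thesis using assms by (simp add: field_simps)
qed

lemma hmono:
  assumes "0 \<le> s" "s \<le> t"
  shows "h s \<le> h t"
proof (rule ccontr)
  assume "\<not> ?thesis"
  then have lt: "h t < h s" by simp
  then have st: "s < t" using assms by (cases "s = t") auto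
  define \<delta> where "\<delta> = h s - h t"
  have d0: "\<delta> > 0" unfolding \<delta>_def using lt by simp
  define u where "u = t + (t - s) * (h s / \<delta> + 1)"
  have hs0: "h s \<ge> 0" using hnn assms by simp
  have "(t - s) * (h s / \<delta> + 1) > 0" using st d0 hs0 by (simp add: add_nonneg_pos)
  then have tu: "t < u" unfolding u_def by simp
  have ch: "h s + (t-s)/(u-s) * (h u - h s) \<le> h t" using chord[OF assms(1) st tu] .
  have us: "u - s > 0" using st tu by simp
  have "(t-s)/(u-s) * (h u - h s) \<le> - \<delta>" using ch unfolding \<delta>_def by simp
  then have "(t-s) * (h u - h s) \<le> - \<delta> * (u - s)" using us by (simp add: divide_simps)
  moreover have "\<delta> * (u - s) = (t - s) * (h s + 2*\<delta>)" unfolding u_def using d0 by (simp add: field_simps)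
  ultimately have "(t-s) * (h u - h s) \<le> (t - s) * (- (h s + 2*\<delta>))" by (simp add: algebra_simps)
  then have "h u - h s \<le> - (h s + 2*\<delta>)" using st by (simp add: mult_le_cancel_left_pos)
  then have "h u < 0" using d0 by simp
  moreover have "h u \<ge> 0" using hnn tu st assms by simp
  ultimately show False by simp
qed

lemma hcont: "continuous_on {0<..} h"
proof -
  have "convex_on {0<..} (\<lambda>x. - h x)"
    using hc unfolding concave_on_def by (rule convex_on_subset) auto
  then have "continuous_on {0<..} (\<lambda>x. - h x)" by (intro convex_on_continuous) auto
  then have "continuous_on {0<..} (\<lambda>x. - (- h x))" by (rule continuous_on_minus)
  then show ?thesis by simp
qed


lemma caseB:
  assumes e0: "0 < e0" and lb: "\<And>t. t > 0 \<Longrightarrow> e0 \<le> h t / t"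
  shows "\<exists>(X :: nat set) (d :: nat \<Rightarrow> nat \<Rightarrow> real).
           infinite X \<and> Metric_space X d \<and>
           (\<exists>f :: nat \<Rightarrow> real^2. \<forall>x\<in>X. \<forall>y\<in>X. dist (f x) (f y) = h (d x y))"
proof -
  define Q where "Q = (\<lambda>t. h t / t) ` {0<..}"
  define L where "L = Inf Q"
  have Qne: "Q \<noteq> {}" unfolding Q_def by auto
  have bdd: "bdd_below Q" unfolding Q_def bdd_below_def using lb by auto
  have Lle: "L \<le> h t / t" if "t > 0" for t
    unfolding L_def using that bdd by (intro cInf_lower) (auto simp: Q_def)
  have Lge: "e0 \<le> L" unfolding L_def using Qne lb by (intro cInf_greatest) (auto simp: Q_def)
  have L0: "L > 0" using Lge e0 by simp
  have hL: "L * t \<le> h t" if "t > 0" for t using Lle[OF that] that by (simp add: field_simps)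
  have slope: "L * (t - s) \<le> h t - h s" if st: "0 \<le> s" "s < t" for s t
  proof (rule ccontr)
    assume "\<not> ?thesis"
    then have m: "h t - h s < L * (t - s)" by simp
    define m where "m = (h t - h s) / (t - s)"
    have mL: "m < L" unfolding m_def using m st by (simp add: divide_simps)
    define u where "u = t + 1 + \<bar>h s - m * s\<bar> / (L - m)"
    have "0 \<le> \<bar>h s - m * s\<bar> / (L - m)" using mL by simp
    then have tu: "t < u" unfolding u_def by linarith
    have ch: "h s + (t-s)/(u-s) * (h u - h s) \<le> h t" using chord[OF st(1) st(2) tu] .
    have us: "u - s > 0" using st tu by simp
    have "(t-s) * (h u - h s) \<le> (h t - h s) * (u - s)" using ch us by (simp add: divide_simps algebra_simps)
    also have "\<dots> = m * (t - s) * (u - s)" unfolding m_def using st by simp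
    finally have "(t-s) * (h u - h s) \<le> (t - s) * (m * (u - s))" by (simp add: algebra_simps)
    then have hu: "h u - h s \<le> m * (u - s)" using st by (simp add: mult_le_cancel_left_pos)
    have "L * u \<le> h u" using hL tu st by simp
    then have "(L - m) * u \<le> h s - m * s" using hu by (simp add: algebra_simps)
    moreover have "(L - m) * u > \<bar>h s - m * s\<bar>"
    proof -
      have "(L - m) * u = (L - m) * (t + 1) + \<bar>h s - m * s\<bar>" unfolding u_def using mL
        by (simp add: field_simps)
      moreover have "(L - m) * (t + 1) > 0" using mL st by simp
      ultimately show ?thesis by simp
    qed
    ultimately show False by simp
  qed
  have thr: "\<exists>u\<ge>1. \<forall>t\<ge>u. \<tau> * h t \<le> L * t" if "0 < \<tau>" "\<tau> < 1" for \<tau>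
  proof -
    have "L < L / \<tau>" using that L0 by (simp add: field_simps)
    then obtain q where "q \<in> Q" "q < L / \<tau>" using cInf_less_iff[OF Qne bdd] unfolding L_def by auto
    then obtain t0 where t0: "t0 > 0" "h t0 / t0 < L / \<tau>" unfolding Q_def by auto
    show ?thesis
    proof (intro exI[of _ "max 1 t0"] conjI allI impI)
      fix t assume "max 1 t0 \<le> t"
      then have t: "t0 \<le> t" "t > 0" using t0 by auto
      have "h t / t < L / \<tau>" using lam_anti[OF t0(1) t(1)] t0 by simp
      then show "\<tau> * h t \<le> L * t" using t that by (simp add: field_simps)
    qed simp
  qed
  define g where "g x = (SOME t. 1 \<le> t \<and> h t = x)" for x
  have gex: "1 \<le> g x \<and> h (g x) = x" if "h 1 \<le> x" for x
  proof -
    define N where "N = max 1 (x / L) + 1"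
    have N1: "1 \<le> N" unfolding N_def by simp
    have "x \<le> L * N"
    proof -
      have "x / L \<le> N" unfolding N_def by simp
      then show ?thesis using L0 by (simp add: field_simps)
    qed
    also have "\<dots> \<le> h N" using hL N1 by simp
    finally have xN: "x \<le> h N" .
    have "continuous_on {1..N} h" using hcont by (rule continuous_on_subset) auto
    then have "\<exists>t. 1 \<le> t \<and> t \<le> N \<and> h t = x" using IVT'[of h 1 x N] that xN N1 by simp
    then have "\<exists>t. 1 \<le> t \<and> h t = x" by auto
    then show ?thesis unfolding g_def by (rule someI_ex)
  qed
  have gmono: "g x \<le> g y" if "h 1 \<le> x" "x \<le> y" for x y
  proof (rule ccontr)
    assume "\<not> ?thesis"
    then have "g y < g x" by simp
    moreover have "1 \<le> g y" using gex that by auto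
    ultimately have "h (g y) \<le> h (g x)" by (intro hmono) auto
    then have "y \<le> x" using gex that by auto
    then have "x = y" using that by simp
    then show False using \<open>g y < g x\<close> by simp
  qed
  have key: "g B1 \<le> g B2 + g S"
    if tau: "0 < \<tau>" "\<tau> < 1" and u: "u \<ge> 1" "\<forall>t\<ge>u. \<tau> * h t \<le> L * t"
      and B: "h 1 \<le> B1" "h 1 \<le> B2" "h u < S" and diff: "B1 - B2 \<le> \<tau> * S" for \<tau> u B1 B2 S
  proof (rule ccontr)
    assume "\<not> ?thesis"
    then have lt: "g B2 + g S < g B1" by simp
    have S1: "h 1 \<le> S" using hmono[of 1 u] u B by simp
    note G1 = gex[OF B(1)] and G2 = gex[OF B(2)] and G3 = gex[OF S1]
    have "L * (g B1 - (g B2 + g S)) \<le> h (g B1) - h (g B2 + g S)"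
      using slope[of "g B2 + g S" "g B1"] lt G2 G3 by simp
    moreover have "L * (g B1 - (g B2 + g S)) > 0" using L0 lt by simp
    ultimately have a1: "h (g B2 + g S) < B1" using G1 by simp
    have "L * ((g B2 + g S) - g B2) \<le> h (g B2 + g S) - h (g B2)"
      using slope[of "g B2" "g B2 + g S"] G2 G3 by simp
    then have a2: "B2 + L * g S \<le> h (g B2 + g S)" using G2 by simp
    have "u \<le> g S"
    proof (rule ccontr)
      assume "\<not> u \<le> g S"
      then have "h (g S) \<le> h u" using G3 by (intro hmono) auto
      then show False using G3 B(3) by simp
    qed
    then have "\<tau> * h (g S) \<le> L * g S" using u by simp
    then have "\<tau> * S \<le> L * g S" using G3 by simp
    then show False using a1 a2 diff by simp
  qed
  obtain U where U: "\<And>n. U n \<ge> 1 \<and> (\<forall>t\<ge>U n. tt n * h t \<le> L * t)"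
    using thr[OF tt_pos tt_lt1] by metis
  define r where "r = rec_nat 1 (\<lambda>n rn. max (rn / ee (Suc n)) (2 * (h (U (Suc n)) + h 1) + 2))"
  have r0: "r 0 = 1" unfolding r_def by simp
  have rS: "r (Suc n) = max (r n / ee (Suc n)) (2 * (h (U (Suc n)) + h 1) + 2)" for n
    unfolding r_def by simp
  have h1: "h 1 \<ge> 0" using hnn by simp
  have hU: "h (U n) \<ge> 0" for n using hnn U[of n] by simp
  have rpos: "0 < r n" for n
  proof (cases n)
    case 0 then show ?thesis using r0 by simp
  next
    case (Suc m) then show ?thesis using rS[of m] h1 hU[of "Suc m"] by (simp add: less_max_iff_disj)
  qed
  have rstep: "r n \<le> ee (Suc n) * r (Suc n)" for n
  proof -
    have "r n / ee (Suc n) \<le> r (Suc n)" unfolding rS by simp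
    then show ?thesis using ee_pos[of "Suc n"] by (simp add: field_simps mult.commute)
  qed
  have rbig: "2 * (h (U n) + h 1) + 2 \<le> r n" if "n \<ge> 1" for n
  proof -
    have "n = Suc (n - 1)" using that by simp
    then show ?thesis using rS[of "n - 1"] by (metis max.cobounded2)
  qed
  define D where "D m n = cmod (pt r m - pt r n)" for m n
  have Dsym: "D m n = D n m" for m n unfolding D_def by (simp add: norm_minus_commute)
  have Dlow: "h (U n) + h 1 + 1 \<le> D m n" if "m < n" for m n
  proof -
    have "r n / 2 \<le> D m n" unfolding D_def by (rule GeomB_pair[OF rpos rstep that])
    moreover have "2 * (h (U n) + h 1) + 2 \<le> r n" using that by (intro rbig) auto
    ultimately show ?thesis by simp
  qed
  have Dge1: "h 1 \<le> D m n" if "m \<noteq> n" for m n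
  proof (cases "m < n")
    case True then show ?thesis using Dlow[OF True] hU[of n] by simp
  next
    case False then have "n < m" using that by simp
    then show ?thesis using Dlow[of n m] hU[of m] Dsym by simp
  qed
  show ?thesis
  proof (rule main_abs[of h g "pt r"])
    show "h 0 = 0" by (fact h0)
    fix m n :: nat assume "m \<noteq> n"
    then have "1 \<le> g (D m n) \<and> h (g (D m n)) = D m n" using gex Dge1 by blast
    then show "0 < g (cmod (pt r m - pt r n))" "h (g (cmod (pt r m - pt r n))) = cmod (pt r m - pt r n)"
      unfolding D_def by auto
  next
    fix i j k :: nat assume ij: "i < j" and jk: "j < k"
    note GB = GeomB[OF rpos rstep ij jk, folded D_def]
    have Sij: "h (U j) < D i j" using Dlow[OF ij] h1 by simp
    have ge1: "h 1 \<le> D i k" "h 1 \<le> D j k" using Dge1 ij jk by auto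
    have a: "g (D i k) \<le> g (D j k) + g (D i j)"
      using key[OF tt_pos tt_lt1, of "U j" j "D i k" "D j k" "D i j"] U[of j] ge1 Sij GB(1) by simp
    have c: "g (D j k) \<le> g (D i k) + g (D i j)"
      using key[OF tt_pos tt_lt1, of "U j" j "D j k" "D i k" "D i j"] U[of j] ge1 Sij GB(1) by simp
    have b: "g (D i j) \<le> g (D i k)" using gmono[of "D i j" "D i k"] Dge1[of i j] ij GB(2) by simp
    have "1 \<le> g (D j k)" using gex ge1 by blast
    then show "g (cmod (pt r i - pt r k)) \<le> g (cmod (pt r i - pt r j)) + g (cmod (pt r j - pt r k)) \<and>
      g (cmod (pt r i - pt r j)) \<le> g (cmod (pt r i - pt r k)) + g (cmod (pt r j - pt r k)) \<and>
      g (cmod (pt r j - pt r k)) \<le> g (cmod (pt r i - pt r j)) + g (cmod (pt r i - pt r k))"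
      using a b c unfolding D_def by simp
  qed
qed


lemma caseA:
  assumes Mb: "\<And>t. t > 0 \<Longrightarrow> h t / t \<le> M" and a0: "0 < a" and ha: "0 < h a"
  shows "\<exists>(X :: nat set) (d :: nat \<Rightarrow> nat \<Rightarrow> real).
           infinite X \<and> Metric_space X d \<and>
           (\<exists>f :: nat \<Rightarrow> real^2. \<forall>x\<in>X. \<forall>y\<in>X. dist (f x) (f y) = h (d x y))"
proof -
  define Q where "Q = (\<lambda>t. h t / t) ` {0<..}"
  define L where "L = Sup Q"
  have Qne: "Q \<noteq> {}" unfolding Q_def by auto
  have bdd: "bdd_above Q" unfolding Q_def bdd_above_def using Mb by auto
  have Lge: "h t / t \<le> L" if "t > 0" for t
    unfolding L_def using that bdd by (intro cSup_upper) (auto simp: Q_def)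
  have L0: "L > 0" using Lge[OF a0] a0 ha by (smt (verit) divide_pos_pos)
  have hL: "h t \<le> L * t" if "t \<ge> 0" for t
  proof (cases "t = 0")
    case True then show ?thesis using h0 by simp
  next
    case False then have "t > 0" using that by simp
    then show ?thesis using Lge[of t] by (simp add: field_simps)
  qed
  have h1: "h 1 > 0"
  proof (cases "a \<le> 1")
    case True then show ?thesis using hmono[of a 1] a0 ha by simp
  next
    case False then have "h a / a \<le> h 1 / 1" using lam_anti[of 1 a] by simp
    moreover have "h a / a > 0" using a0 ha by simp
    ultimately show ?thesis by simp
  qed
  have thr: "\<exists>T>0. \<forall>x y. 0 \<le> x \<longrightarrow> x < y \<longrightarrow> y \<le> T \<longrightarrow> \<tau> * L * (y - x) < h y - h x"
    if tau: "0 < \<tau>" "\<tau> < 1" for \<tau>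
  proof -
    define \<kappa> where "\<kappa> = (1 + \<tau>) / 2"
    have "\<kappa> * L < L" unfolding \<kappa>_def using tau L0 by (simp add: field_simps)
    then obtain q where "q \<in> Q" "\<kappa> * L < q" using less_cSup_iff[OF Qne bdd] unfolding L_def by auto
    then obtain u where u: "u > 0" "\<kappa> * L < h u / u" unfolding Q_def by auto
    have hu: "\<kappa> * L * u < h u" using u by (simp add: field_simps)
    show ?thesis
    proof (intro exI[of _ "u/2"] conjI allI impI)
      show "0 < u / 2" using u by simp
      fix x y assume xy: "0 \<le> x" "x < y" "y \<le> u/2"
      have yu: "y < u" using xy u by simp
      have ch: "h x + (y-x)/(u-x) * (h u - h x) \<le> h y" using chord[OF xy(1) xy(2) yu] .
      have ux: "u - x > 0" using xy yu by simp
      have "L * (\<kappa> * u - x) < h u - h x" using hu hL[OF xy(1)] by (simp add: algebra_simps)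
      moreover have "\<tau> * L * (u - x) \<le> L * (\<kappa> * u - x)"
      proof -
        have e1: "0 \<le> (1 - \<tau>) * (u - 2*x)" using xy tau by simp
        have e2: "\<kappa> * u - x - \<tau> * (u - x) = (1 - \<tau>) * (u - 2*x) / 2"
          unfolding \<kappa>_def by (simp add: field_simps)
        have "\<tau> * (u - x) \<le> \<kappa> * u - x" using e1 e2 by linarith
        then show ?thesis using L0 by (simp add: mult_left_mono mult.assoc mult.left_commute)
      qed
      ultimately have "\<tau> * L * (u - x) < h u - h x" by simp
      then have "(y-x)/(u-x) * (\<tau> * L * (u - x)) < (y-x)/(u-x) * (h u - h x)"
        using xy ux by (intro mult_strict_left_mono) auto
      moreover have "(y-x)/(u-x) * (\<tau> * L * (u - x)) = \<tau> * L * (y - x)" using ux by simp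
      ultimately show "\<tau> * L * (y - x) < h y - h x" using ch by simp
    qed
  qed
  define g where "g x = (SOME t. 0 < t \<and> t \<le> 1 \<and> h t = x)" for x
  have gex: "0 < g x \<and> g x \<le> 1 \<and> h (g x) = x" if x: "0 < x" "x \<le> h 1" for x
  proof -
    define a0 where "a0 = min 1 (x / L)"
    have a00: "0 < a0" "a0 \<le> 1" unfolding a0_def using x L0 by auto
    have "h a0 \<le> L * a0" using hL a00 by simp
    also have "\<dots> \<le> x" unfolding a0_def using L0 by (simp add: min_def field_simps)
    finally have ha0: "h a0 \<le> x" .
    have "continuous_on {a0..1} h" using hcont by (rule continuous_on_subset) (use a00 in auto)
    then have "\<exists>t. a0 \<le> t \<and> t \<le> 1 \<and> h t = x" using IVT'[of h a0 x 1] ha0 x a00 by simp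
    then obtain t where t: "a0 \<le> t" "t \<le> 1" "h t = x" by blast
    then have "\<exists>t. 0 < t \<and> t \<le> 1 \<and> h t = x" using a00 by (intro exI[of _ t]) simp
    then show ?thesis unfolding g_def by (rule someI_ex)
  qed
  have gup: "g x * h 1 \<le> x" if x: "0 < x" "x \<le> h 1" for x
  proof -
    note G = gex[OF x]
    have "h 1 / 1 \<le> h (g x) / g x" using lam_anti[of "g x" 1] G by simp
    then show ?thesis using G by (simp add: field_simps)
  qed
  have glow: "x \<le> L * g x" if x: "0 < x" "x \<le> h 1" for x
    using hL[of "g x"] gex[OF x] by simp
  have gmono: "g x \<le> g y" if "0 < x" "x \<le> h 1" "0 < y" "y \<le> h 1" "x \<le> y" for x y
  proof (rule ccontr)
    assume "\<not> ?thesis"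
    then have "g y < g x" by simp
    moreover have "0 < g y" using gex that by auto
    ultimately have "h (g y) \<le> h (g x)" by (intro hmono) auto
    then have "y \<le> x" using gex that by auto
    then have "x = y" using that by simp
    then show False using \<open>g y < g x\<close> by simp
  qed
  have key: "g B1 \<le> g B2 + g S"
    if tau: "0 < \<tau>" and T: "\<forall>x y. 0 \<le> x \<longrightarrow> x < y \<longrightarrow> y \<le> T \<longrightarrow> \<tau> * L * (y - x) < h y - h x"
      and B: "0 < B1" "B1 \<le> h 1" "0 < B2" "B2 \<le> h 1" "0 < S" "S \<le> h 1"
      and sm: "B2 + S \<le> T * h 1" and diff: "B1 - B2 \<le> \<tau> * S" for \<tau> T B1 B2 S
  proof (rule ccontr)
    assume "\<not> ?thesis"
    then have lt: "g B2 + g S < g B1" by simp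
    note G1 = gex[OF B(1,2)] and G2 = gex[OF B(3,4)] and G3 = gex[OF B(5,6)]
    have "(g B2 + g S) * h 1 \<le> B2 + S" using gup[OF B(3,4)] gup[OF B(5,6)] by (simp add: algebra_simps)
    then have "(g B2 + g S) * h 1 \<le> T * h 1" using sm by simp
    then have sT: "g B2 + g S \<le> T" using h1 by simp
    have a1: "h (g B2 + g S) \<le> B1" using hmono[of "g B2 + g S" "g B1"] lt G1 G2 G3 by simp
    have "\<tau> * L * (g B2 + g S - g B2) < h (g B2 + g S) - h (g B2)"
      using T[rule_format, of "g B2" "g B2 + g S"] sT G2 G3 by simp
    then have a2: "B2 + \<tau> * (L * g S) < h (g B2 + g S)" using G2 by (simp add: mult.assoc)
    have "\<tau> * S \<le> \<tau> * (L * g S)" using glow[OF B(5,6)] tau by simp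
    then show False using a1 a2 diff by simp
  qed
  obtain T where T: "\<And>n. T n > 0 \<and> (\<forall>x y. 0 \<le> x \<longrightarrow> x < y \<longrightarrow> y \<le> T n \<longrightarrow> tt n * L * (y - x) < h y - h x)"
    using thr[OF tt_pos tt_lt1] by metis
  define r where "r = rec_nat (min (h 1 / 2) (T 0 * h 1 / 8)) (\<lambda>n rn. min (ee n * rn) (T (Suc n) * h 1 / 8))"
  have r0: "r 0 = min (h 1 / 2) (T 0 * h 1 / 8)" unfolding r_def by simp
  have rS: "r (Suc n) = min (ee n * r n) (T (Suc n) * h 1 / 8)" for n
    unfolding r_def by simp
  have rpos: "0 < r n" for n
  proof (induction n)
    case 0 then show ?case using r0 h1 T[of 0] by simp
  next
    case (Suc n) then show ?case using rS[of n] h1 T[of "Suc n"] ee_pos[of n] by simp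
  qed
  have rstep: "r (Suc n) \<le> ee n * r n" for n using rS[of n] by simp
  have rT: "r n \<le> T n * h 1 / 8" for n
  proof (cases n)
    case 0 then show ?thesis using r0 by simp
  next
    case (Suc m) then show ?thesis using rS[of m] by simp
  qed
  have r0h: "r 0 \<le> h 1 / 2" using r0 by simp
  define D where "D m n = cmod (pt r m - pt r n)" for m n
  have Dsym: "D m n = D n m" for m n unfolding D_def by (simp add: norm_minus_commute)
  have Dok: "0 < D m n \<and> D m n \<le> h 1" if "m \<noteq> n" for m n
  proof -
    have "0 < D m n \<and> D m n \<le> 2 * r 0" if "m < n" for m n
      using GeomA_pair[OF rpos rstep that] unfolding D_def by simp
    note P = this
    have "0 < D m n \<and> D m n \<le> 2 * r 0"
    proof (cases "m < n")
      case True then show ?thesis using P by blast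
    next
      case False then have "n < m" using that by simp
      then show ?thesis using P[of n m] Dsym[of m n] by simp
    qed
    then show ?thesis using r0h by simp
  qed
  show ?thesis
  proof (rule main_abs[of h g "pt r"])
    show "h 0 = 0" by (fact h0)
    fix m n :: nat assume "m \<noteq> n"
    then have "0 < g (D m n) \<and> g (D m n) \<le> 1 \<and> h (g (D m n)) = D m n" using gex Dok by blast
    then show "0 < g (cmod (pt r m - pt r n))" "h (g (cmod (pt r m - pt r n))) = cmod (pt r m - pt r n)"
      unfolding D_def by auto
  next
    fix i j k :: nat assume ij: "i < j" and jk: "j < k"
    note GA = GeomA[OF rpos rstep ij jk, folded D_def]
    have ok: "0 < D i j" "D i j \<le> h 1" "0 < D i k" "D i k \<le> h 1" "0 < D j k" "D j k \<le> h 1"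
      using Dok ij jk by auto
    have sm1: "D i j + D j k \<le> T i * h 1" and sm2: "D i k + D j k \<le> T i * h 1"
      using GA(4,5,6) rT[of i] rpos[of i] by simp_all
    have a: "g (D i k) \<le> g (D i j) + g (D j k)"
      using key[OF tt_pos[of i], of "T i" "D i k" "D i j" "D j k"] T[of i] ok sm1 GA(1) by simp
    have b: "g (D i j) \<le> g (D i k) + g (D j k)"
      using key[OF tt_pos[of i], of "T i" "D i j" "D i k" "D j k"] T[of i] ok sm2 GA(1) by simp
    have c0: "g (D j k) \<le> g (D i j)" using gmono[of "D j k" "D i j"] ok GA(2) by simp
    have "0 < g (D i k)" using gex ok by blast
    then show "g (cmod (pt r i - pt r k)) \<le> g (cmod (pt r i - pt r j)) + g (cmod (pt r j - pt r k)) \<and>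
      g (cmod (pt r i - pt r j)) \<le> g (cmod (pt r i - pt r k)) + g (cmod (pt r j - pt r k)) \<and>
      g (cmod (pt r j - pt r k)) \<le> g (cmod (pt r i - pt r j)) + g (cmod (pt r i - pt r k))"
      using a b c0 unfolding D_def by simp
  qed
qed

end


theorem proposition3p4:
  fixes h :: "real \<Rightarrow> real"
  assumes h_nonneg: "\<And>t. t \<ge> 0 \<Longrightarrow> h t \<ge> 0"
    and h_zero: "h 0 = 0"
    and h_concave: "concave_on {0..} h"
    and h_growth: "\<not> filterlim (\<lambda>t. h t / t) at_top (at_right 0)
                   \<or> \<not> ((\<lambda>t. h t / t) \<longlongrightarrow> 0) at_top"
  shows "\<exists>(X :: nat set) (d :: nat \<Rightarrow> nat \<Rightarrow> real).
           infinite X \<and> Metric_space X d \<and>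
           (\<exists>f :: nat \<Rightarrow> real^2. \<forall>x\<in>X. \<forall>y\<in>X. dist (f x) (f y) = h (d x y))"
proof (cases "\<forall>t>0. h t = 0")
  case True
  define d :: "nat \<Rightarrow> nat \<Rightarrow> real" where "d x y = (if x = y then 0 else 1)" for x y
  have "Metric_space UNIV d"
  proof
    fix x y z :: nat
    show "0 \<le> d x y" by (simp add: d_def)
    show "d x y = d y x" by (simp add: d_def)
    show "d x y = 0 \<longleftrightarrow> x = y" by (simp add: d_def)
    show "d x z \<le> d x y + d y z"
      by (cases "x = y"; cases "y = z"; cases "x = z") (simp_all add: d_def)
  qed
  moreover have "\<forall>x\<in>UNIV. \<forall>y\<in>UNIV. dist ((\<lambda>_. 0 :: real^2) x) ((\<lambda>_. 0) y) = h (d x y)"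
  proof (intro ballI)
    fix x y :: nat
    have "h 1 = 0" using True by simp
    then show "dist ((\<lambda>_. 0 :: real^2) x) ((\<lambda>_. 0) y) = h (d x y)"
      using h_zero by (simp add: d_def)
  qed
  ultimately show ?thesis using infinite_UNIV_nat
    by (intro exI[of _ UNIV] exI[of _ d] conjI exI[of _ "\<lambda>_. 0 :: real^2"]) simp_all
next
  case False
  then obtain a where a0: "0 < a" and "h a \<noteq> 0" by blast
  then have "0 < h a" using h_nonneg[of a] by simp
  note a = a0 this
  note lam_anti' = lam_anti[OF h_nonneg h_zero h_concave]
  from h_growth show ?thesis
  proof
    assume nf: "\<not> filterlim (\<lambda>t. h t / t) at_top (at_right 0)"
    have "\<exists>M. \<forall>t>0. h t / t \<le> M"
    proof (rule ccontr)
      assume nM: "\<not> ?thesis"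
      have "filterlim (\<lambda>t. h t / t) at_top (at_right 0)"
        unfolding filterlim_at_top
      proof
        fix Z :: real
        obtain t where t: "t > 0" "Z < h t / t" using nM by (meson not_le)
        show "eventually (\<lambda>x. Z \<le> h x / x) (at_right 0)"
          unfolding eventually_at_right_field
        proof (intro exI[of _ t] conjI allI impI)
          fix y :: real assume "0 < y" "y < t"
          then show "Z \<le> h y / y" using lam_anti'[of y t] t by simp
        qed (use t in simp)
      qed
      then show False using nf by simp
    qed
    then obtain M where "\<And>t. t > 0 \<Longrightarrow> h t / t \<le> M" by blast
    then show ?thesis using caseA[OF h_nonneg h_zero h_concave _ a] by blast
  next
    assume nt: "\<not> ((\<lambda>t. h t / t) \<longlongrightarrow> 0) at_top"
    have "\<exists>e0>0. \<forall>t>0. e0 \<le> h t / t"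
    proof (rule ccontr)
      assume ne: "\<not> ?thesis"
      have "((\<lambda>t. h t / t) \<longlongrightarrow> 0) at_top"
      proof (rule order_tendstoI)
        fix e :: real assume "e < 0"
        then show "eventually (\<lambda>x. e < h x / x) at_top"
          unfolding eventually_at_top_linorder
          using h_nonneg by (intro exI[of _ 1]) (smt (verit) divide_nonneg_nonneg)
      next
        fix e :: real assume e: "0 < e"
        then obtain t where t: "t > 0" "h t / t < e" using ne by (meson not_le)
        show "eventually (\<lambda>x. h x / x < e) at_top"
          unfolding eventually_at_top_linorder
        proof (intro exI[of _ t] allI impI)
          fix n assume "t \<le> n"
          then show "h n / n < e" using lam_anti'[of t n] t by simp
        qed
      qed
      then show False using nt by simp
    qed
    then obtain e0 where "0 < e0" "\<And>t. t > 0 \<Longrightarrow> e0 \<le> h t / t" by blast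
    then show ?thesis using caseB[OF h_nonneg h_zero h_concave] by blast
  qed
qed

end
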